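(* Let $(C\otimes V,\delta_{C\otimes V})$ be a weak crossed coproduct with precounit $\upsilon$ and associated morphisms $\chi_V^C,\tau_V^C$, let $D$ be a coalgebra, and let $p_C:D\rightarrow C$ be a coalgebra morphism and $p_V:D\rightarrow V$ a morphism. The following are equivalent. (i) There exists a unique coalgebra morphism $\varpi:D\rightarrow C\Box V$ such that $\gamma_\upsilon\circ i_{C\otimes V}\circ\varpi=p_C$ and $(\varepsilon_C\otimes V)\circ i_{C\otimes V}\circ\varpi=p_V$. (ii) $\upsilon\circ(p_C\otimes p_V)\circ\delta_D=\varepsilon_D$, $\chi_V^C\circ(p_C\otimes p_V)\circ\delta_D=(p_V\otimes p_C)\circ\delta_D$ and $\tau_V^C\circ(p_C\otimes p_V)\circ\delta_D=(p_V\otimes p_V)\circ\delta_D$.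
   Context: $\mathcal C$ is a strict monoidal category with tensor product $\otimes$ and unit object $K$ in which every idempotent splits (every idempotent $\Gamma$ factors as $i\circ p$ with $p\circ i$ the identity of its image). We write $C\otimes f$ for $id_C\otimes f$. A coalgebra $C$ has counit $\varepsilon_C$ and coproduct $\delta_C$. Weak crossed coproducts. Let $C$ be a coalgebra and $V$ an object, and let $\chi_V^C:C\otimes V\rightarrow V\otimes C$ satisfy $(\chi_V^C\otimes C)\circ(C\otimes\chi_V^C)\circ(\delta_C\otimes V)=(V\otimes\delta_C)\circ\chi_V^C$. Then $\Gamma_{C\otimes V}=(C\otimes V\otimes\varepsilon_C)\circ(C\otimes\chi_V^C)\circ(\delta_C\otimes V)$ is idempotent; $C\Box V$ denotes its image with injection $i_{C\otimes V}$ and projection $p_{C\otimes V}$. Let $\tau_V^C:C\otimes V\rightarrow V\otimes V$ with $\tau_V^C\circ\Gamma_{C\otimes V}=\tau_V^C$. The twisted condition is $(\tau_V^C\otimes C)\circ(C\otimes\chi_V^C)\circ(\delta_C\otimes V)=(V\otimes\chi_V^C)\circ(\chi_V^C\otimes V)\circ(C\otimes\tau_V^C)\circ(\delta_C\otimes V)$ and the cocycle condition is $(\tau_V^C\otimes V)\circ(C\otimes\tau_V^C)\circ(\delta_C\otimes V)=(V\otimes\tau_V^C)\circ(\chi_V^C\otimes V)\circ(C\otimes\tau_V^C)\circ(\delta_C\otimes V)$. Put $\delta_{C\otimes V}=(C\otimes\chi_V^C\otimes V)\circ(\delta_C\otimes\tau_V^C)\circ(\delta_C\otimes V)$. If the twisted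 and cocycle conditions hold, $(C\otimes V,\delta_{C\otimes V})$ is a weak crossed coproduct. For $\upsilon:C\otimes V\rightarrow K$ put $\gamma_\upsilon=(C\otimes\upsilon)\circ(\delta_C\otimes V)$. A weak crossed coproduct with precounit $\upsilon$ is one with $(V\otimes\upsilon)\circ(\chi_V^C\otimes V)\circ(C\otimes\tau_V^C)\circ(\delta_C\otimes V)=(\varepsilon_C\otimes V)\circ\Gamma_{C\otimes V}$, $(\upsilon\otimes V)\circ(C\otimes\tau_V^C)\circ(\delta_C\otimes V)=(\varepsilon_C\otimes V)\circ\Gamma_{C\otimes V}$ and $(\upsilon\otimes C)\circ(C\otimes\chi_V^C)\circ(\delta_C\otimes V)=\gamma_\upsilon$. Then $C\Box V$ is a coalgebra with coproduct $(p_{C\otimes V}\otimes p_{C\otimes V})\circ\delta_{C\otimes V}\circ i_{C\otimes V}$ and counit $\upsilon\circ i_{C\otimes V}$. *)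

theory Defs
  imports Main
begin

text \<open>A (small) category presented by objects of type 'o and a predicate Arr
  on a type 'm of candidate morphisms, equipped with a strict tensor product.\<close>

record ('o, 'm) moncat =
  Arr  :: "'m \<Rightarrow> bool"
  Dom  :: "'m \<Rightarrow> 'o"
  Cod  :: "'m \<Rightarrow> 'o"
  Id   :: "'o \<Rightarrow> 'm"
  Comp :: "'m \<Rightarrow> 'm \<Rightarrow> 'm"   (* Comp g f = g \<circ> f *)
  Tobj :: "'o \<Rightarrow> 'o \<Rightarrow> 'o"
  Tmor :: "'m \<Rightarrow> 'm \<Rightarrow> 'm"
  Unit :: "'o"

definition hom :: "('o, 'm) moncat \<Rightarrow> 'm \<Rightarrow> 'o \<Rightarrow> 'o \<Rightarrow> bool" where
  "hom M f A B \<longleftrightarrow> Arr M f \<and> Dom M f = A \<and> Cod M f = B"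

definition strict_monoidal_category :: "('o, 'm) moncat \<Rightarrow> bool" where
  "strict_monoidal_category M \<longleftrightarrow>
     (\<forall>A. hom M (Id M A) A A)
   \<and> (\<forall>f g A B C. hom M f A B \<longrightarrow> hom M g B C \<longrightarrow> hom M (Comp M g f) A C)
   \<and> (\<forall>f A B. hom M f A B \<longrightarrow> Comp M f (Id M A) = f \<and> Comp M (Id M B) f = f)
   \<and> (\<forall>f g h A B C D. hom M f A B \<longrightarrow> hom M g B C \<longrightarrow> hom M h C D \<longrightarrow>
         Comp M h (Comp M g f) = Comp M (Comp M h g) f)
   \<and> (\<forall>f g A B A' B'. hom M f A B \<longrightarrow> hom M g A' B' \<longrightarrow>
         hom M (Tmor M f g) (Tobj M A A') (Tobj M B B'))
   \<and> (\<forall>A B. Tmor M (Id M A) (Id M B) = Id M (Tobj M A B))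
   \<and> (\<forall>f f' g g' A B C A' B' C'. hom M f A B \<longrightarrow> hom M g B C \<longrightarrow>
         hom M f' A' B' \<longrightarrow> hom M g' B' C' \<longrightarrow>
         Tmor M (Comp M g f) (Comp M g' f') = Comp M (Tmor M g g') (Tmor M f f'))
   \<and> (\<forall>A B C. Tobj M (Tobj M A B) C = Tobj M A (Tobj M B C))
   \<and> (\<forall>f g h. Arr M f \<longrightarrow> Arr M g \<longrightarrow> Arr M h \<longrightarrow>
         Tmor M (Tmor M f g) h = Tmor M f (Tmor M g h))
   \<and> (\<forall>A. Tobj M (Unit M) A = A \<and> Tobj M A (Unit M) = A)
   \<and> (\<forall>f. Arr M f \<longrightarrow> Tmor M (Id M (Unit M)) f = f \<and> Tmor M f (Id M (Unit M)) = f)"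

definition idempotents_split :: "('o, 'm) moncat \<Rightarrow> bool" where
  "idempotents_split M \<longleftrightarrow>
     (\<forall>e A. hom M e A A \<longrightarrow> Comp M e e = e \<longrightarrow>
        (\<exists>B i p. hom M i B A \<and> hom M p A B \<and> Comp M i p = e \<and> Comp M p i = Id M B))"

definition coalgebra :: "('o, 'm) moncat \<Rightarrow> 'o \<Rightarrow> 'm \<Rightarrow> 'm \<Rightarrow> bool" where
  "coalgebra M C \<delta> \<epsilon> \<longleftrightarrow>
     hom M \<delta> C (Tobj M C C) \<and> hom M \<epsilon> C (Unit M)
   \<and> Comp M (Tmor M \<delta> (Id M C)) \<delta> = Comp M (Tmor M (Id M C) \<delta>) \<delta>
   \<and> Comp M (Tmor M \<epsilon> (Id M C)) \<delta> = Id M C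
   \<and> Comp M (Tmor M (Id M C) \<epsilon>) \<delta> = Id M C"

definition coalgebra_morphism ::
  "('o, 'm) moncat \<Rightarrow> 'o \<Rightarrow> 'm \<Rightarrow> 'm \<Rightarrow> 'o \<Rightarrow> 'm \<Rightarrow> 'm \<Rightarrow> 'm \<Rightarrow> bool" where
  "coalgebra_morphism M D \<delta>D \<epsilon>D C \<delta>C \<epsilon>C f \<longleftrightarrow>
     hom M f D C
   \<and> Comp M (Tmor M f f) \<delta>D = Comp M \<delta>C f
   \<and> Comp M \<epsilon>C f = \<epsilon>D"

definition Gamma :: "('o, 'm) moncat \<Rightarrow> 'o \<Rightarrow> 'm \<Rightarrow> 'm \<Rightarrow> 'o \<Rightarrow> 'm \<Rightarrow> 'm" where
  "Gamma M C \<delta> \<epsilon> V \<chi> =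
     Comp M (Comp M (Tmor M (Id M (Tobj M C V)) \<epsilon>) (Tmor M (Id M C) \<chi>)) (Tmor M \<delta> (Id M V))"

definition delta_CV :: "('o, 'm) moncat \<Rightarrow> 'o \<Rightarrow> 'm \<Rightarrow> 'o \<Rightarrow> 'm \<Rightarrow> 'm \<Rightarrow> 'm" where
  "delta_CV M C \<delta> V \<chi> \<tau> =
     Comp M (Comp M (Tmor M (Tmor M (Id M C) \<chi>) (Id M V)) (Tmor M \<delta> \<tau>)) (Tmor M \<delta> (Id M V))"

definition gamma_ups :: "('o, 'm) moncat \<Rightarrow> 'o \<Rightarrow> 'm \<Rightarrow> 'o \<Rightarrow> 'm \<Rightarrow> 'm" where
  "gamma_ups M C \<delta> V \<upsilon> = Comp M (Tmor M (Id M C) \<upsilon>) (Tmor M \<delta> (Id M V))"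

definition weak_crossed_coproduct_precounit ::
  "('o, 'm) moncat \<Rightarrow> 'o \<Rightarrow> 'm \<Rightarrow> 'm \<Rightarrow> 'o \<Rightarrow> 'm \<Rightarrow> 'm \<Rightarrow> 'm \<Rightarrow> bool" where
  "weak_crossed_coproduct_precounit M C \<delta> \<epsilon> V \<chi> \<tau> \<upsilon> \<longleftrightarrow>
     coalgebra M C \<delta> \<epsilon>
   \<and> hom M \<chi> (Tobj M C V) (Tobj M V C)
   \<and> hom M \<tau> (Tobj M C V) (Tobj M V V)
   \<and> hom M \<upsilon> (Tobj M C V) (Unit M)
   \<comment> \<open>compatibility of \<chi> with \<delta>_C\<close>
   \<and> Comp M (Comp M (Tmor M \<chi> (Id M C)) (Tmor M (Id M C) \<chi>)) (Tmor M \<delta> (Id M V))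
       = Comp M (Tmor M (Id M V) \<delta>) \<chi>
   \<and> Comp M \<tau> (Gamma M C \<delta> \<epsilon> V \<chi>) = \<tau>
   \<comment> \<open>twisted condition\<close>
   \<and> Comp M (Comp M (Tmor M \<tau> (Id M C)) (Tmor M (Id M C) \<chi>)) (Tmor M \<delta> (Id M V))
       = Comp M (Comp M (Comp M (Tmor M (Id M V) \<chi>) (Tmor M \<chi> (Id M V)))
                    (Tmor M (Id M C) \<tau>)) (Tmor M \<delta> (Id M V))
   \<comment> \<open>cocycle condition\<close>
   \<and> Comp M (Comp M (Tmor M \<tau> (Id M V)) (Tmor M (Id M C) \<tau>)) (Tmor M \<delta> (Id M V))
       = Comp M (Comp M (Comp M (Tmor M (Id M V) \<tau>) (Tmor M \<chi> (Id M V)))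
                    (Tmor M (Id M C) \<tau>)) (Tmor M \<delta> (Id M V))
   \<comment> \<open>precounit conditions\<close>
   \<and> Comp M (Comp M (Comp M (Tmor M (Id M V) \<upsilon>) (Tmor M \<chi> (Id M V)))
                    (Tmor M (Id M C) \<tau>)) (Tmor M \<delta> (Id M V))
       = Comp M (Tmor M \<epsilon> (Id M V)) (Gamma M C \<delta> \<epsilon> V \<chi>)
   \<and> Comp M (Comp M (Tmor M \<upsilon> (Id M V)) (Tmor M (Id M C) \<tau>)) (Tmor M \<delta> (Id M V))
       = Comp M (Tmor M \<epsilon> (Id M V)) (Gamma M C \<delta> \<epsilon> V \<chi>)
   \<and> Comp M (Comp M (Tmor M \<upsilon> (Id M C)) (Tmor M (Id M C) \<chi>)) (Tmor M \<delta> (Id M V))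
       = gamma_ups M C \<delta> V \<upsilon>"

end

theory Submission
  imports Defs
begin


locale SMC =
  fixes M :: "('o,'m) moncat"
  assumes smc: "strict_monoidal_category M"
begin

abbreviation cmp (infixr "\<cdot>" 55) where "g \<cdot> f \<equiv> Comp M g f"
abbreviation tns (infixr "\<otimes>" 60) where "f \<otimes> g \<equiv> Tmor M f g"
abbreviation idm ("\<one>") where "\<one> \<equiv> Id M"
abbreviation ob (infixr "\<odot>" 65) where "A \<odot> B \<equiv> Tobj M A B"
abbreviation ar where "ar \<equiv> Arr M"
abbreviation dm where "dm \<equiv> Dom M"
abbreviation cd where "cd \<equiv> Cod M"
abbreviation K where "K \<equiv> Unit M"

lemma hom_iff: "hom M f A B \<longleftrightarrow> ar f \<and> dm f = A \<and> cd f = B" by (simp add: hom_def)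

lemmas SS = smc[unfolded strict_monoidal_category_def]
lemmas S1 = conjunct1[OF SS]
lemmas S2 = conjunct1[OF conjunct2[OF SS]]
lemmas S3 = conjunct1[OF conjunct2[OF conjunct2[OF SS]]]
lemmas S4 = conjunct1[OF conjunct2[OF conjunct2[OF conjunct2[OF SS]]]]
lemmas S5 = conjunct1[OF conjunct2[OF conjunct2[OF conjunct2[OF conjunct2[OF SS]]]]]
lemmas S6 = conjunct1[OF conjunct2[OF conjunct2[OF conjunct2[OF conjunct2[OF conjunct2[OF SS]]]]]]
lemmas S7 = conjunct1[OF conjunct2[OF conjunct2[OF conjunct2[OF conjunct2[OF conjunct2[OF conjunct2[OF SS]]]]]]]
lemmas S8 = conjunct1[OF conjunct2[OF conjunct2[OF conjunct2[OF conjunct2[OF conjunct2[OF conjunct2[OF conjunct2[OF SS]]]]]]]]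
lemmas S9 = conjunct1[OF conjunct2[OF conjunct2[OF conjunct2[OF conjunct2[OF conjunct2[OF conjunct2[OF conjunct2[OF conjunct2[OF SS]]]]]]]]]
lemmas S10 = conjunct1[OF conjunct2[OF conjunct2[OF conjunct2[OF conjunct2[OF conjunct2[OF conjunct2[OF conjunct2[OF conjunct2[OF conjunct2[OF SS]]]]]]]]]]
lemmas S11 = conjunct2[OF conjunct2[OF conjunct2[OF conjunct2[OF conjunct2[OF conjunct2[OF conjunct2[OF conjunct2[OF conjunct2[OF conjunct2[OF SS]]]]]]]]]]

lemma id_ar[simp]: "ar (\<one> A)" and id_dm[simp]: "dm (\<one> A) = A" and id_cd[simp]: "cd (\<one> A) = A"
  using S1 by (auto simp: hom_def)

lemma comp_h: "ar f \<Longrightarrow> ar g \<Longrightarrow> dm g = cd f \<Longrightarrow> hom M (g \<cdot> f) (dm f) (cd g)"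
  using S2 by (simp add: hom_def)
lemma comp_ar[simp]: "ar f \<Longrightarrow> ar g \<Longrightarrow> dm g = cd f \<Longrightarrow> ar (g \<cdot> f)"
  and comp_dm[simp]: "ar f \<Longrightarrow> ar g \<Longrightarrow> dm g = cd f \<Longrightarrow> dm (g \<cdot> f) = dm f"
  and comp_cd[simp]: "ar f \<Longrightarrow> ar g \<Longrightarrow> dm g = cd f \<Longrightarrow> cd (g \<cdot> f) = cd g"
  using comp_h by (auto simp: hom_def)

lemma tns_h: "ar f \<Longrightarrow> ar g \<Longrightarrow> hom M (f \<otimes> g) (dm f \<odot> dm g) (cd f \<odot> cd g)"
  using S5 by (simp add: hom_def)
lemma tns_ar[simp]: "ar f \<Longrightarrow> ar g \<Longrightarrow> ar (f \<otimes> g)"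
  and tns_dm[simp]: "ar f \<Longrightarrow> ar g \<Longrightarrow> dm (f \<otimes> g) = dm f \<odot> dm g"
  and tns_cd[simp]: "ar f \<Longrightarrow> ar g \<Longrightarrow> cd (f \<otimes> g) = cd f \<odot> cd g"
  using tns_h by (auto simp: hom_def)

lemma ob_assoc[simp]: "(A \<odot> B) \<odot> C = A \<odot> (B \<odot> C)"
  and ob_unitl[simp]: "K \<odot> A = A" and ob_unitr[simp]: "A \<odot> K = A"
  using S8 S10 by auto

lemma comp_assoc[simp]: "ar f \<Longrightarrow> ar g \<Longrightarrow> ar h \<Longrightarrow> dm g = cd f \<Longrightarrow> dm h = cd g \<Longrightarrow>
   (h \<cdot> g) \<cdot> f = h \<cdot> (g \<cdot> f)"
proof -
  assume a: "ar f" "ar g" "ar h" "dm g = cd f" "dm h = cd g"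
  have "hom M f (dm f) (cd f)" "hom M g (cd f) (cd g)" "hom M h (cd g) (cd h)" using a by (auto simp: hom_def)
  thus ?thesis using S4 by metis
qed

lemma comp_idl[simp]: "ar f \<Longrightarrow> cd f = B \<Longrightarrow> \<one> B \<cdot> f = f"
  and comp_idr[simp]: "ar f \<Longrightarrow> dm f = A \<Longrightarrow> f \<cdot> \<one> A = f"
proof -
  { assume a: "ar f" have "hom M f (dm f) (cd f)" using a by (auto simp: hom_def)
    hence "f \<cdot> \<one> (dm f) = f \<and> \<one> (cd f) \<cdot> f = f" using S3 by simp }
  thus "ar f \<Longrightarrow> cd f = B \<Longrightarrow> \<one> B \<cdot> f = f" "ar f \<Longrightarrow> dm f = A \<Longrightarrow> f \<cdot> \<one> A = f" by auto
qed

lemma tns_id_id[simp]: "\<one> A \<otimes> \<one> B = \<one> (A \<odot> B)"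
  using S6 by auto

lemma interchange: "ar f \<Longrightarrow> ar g \<Longrightarrow> dm g = cd f \<Longrightarrow> ar f' \<Longrightarrow> ar g' \<Longrightarrow> dm g' = cd f' \<Longrightarrow>
   (g \<cdot> f) \<otimes> (g' \<cdot> f') = (g \<otimes> g') \<cdot> (f \<otimes> f')"
proof -
  assume a: "ar f" "ar g" "dm g = cd f" "ar f'" "ar g'" "dm g' = cd f'"
  have "hom M f (dm f) (cd f)" "hom M g (cd f) (cd g)" "hom M f' (dm f') (cd f')" "hom M g' (cd f') (cd g')"
    using a by (auto simp: hom_def)
  thus ?thesis using S7 by blast
qed

lemma tns_assoc[simp]: "ar f \<Longrightarrow> ar g \<Longrightarrow> ar h \<Longrightarrow> (f \<otimes> g) \<otimes> h = f \<otimes> (g \<otimes> h)"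
  using S9 by auto

lemma tns_unitl[simp]: "ar f \<Longrightarrow> \<one> K \<otimes> f = f" and tns_unitr[simp]: "ar f \<Longrightarrow> f \<otimes> \<one> K = f"
  using S11 by auto

lemma id_merge[simp]: "ar h \<Longrightarrow> \<one> A \<otimes> (\<one> B \<otimes> h) = \<one> (A \<odot> B) \<otimes> h"
  by (metis id_ar tns_assoc tns_id_id)

lemma distl[simp]: "ar f \<Longrightarrow> ar g \<Longrightarrow> dm g = cd f \<Longrightarrow> \<one> X \<otimes> (g \<cdot> f) = (\<one> X \<otimes> g) \<cdot> (\<one> X \<otimes> f)"
  using interchange[of "\<one> X" "\<one> X" f g] by simp
lemma distr[simp]: "ar f \<Longrightarrow> ar g \<Longrightarrow> dm g = cd f \<Longrightarrow> (g \<cdot> f) \<otimes> \<one> X = (g \<otimes> \<one> X) \<cdot> (f \<otimes> \<one> X)"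
  using interchange[of f g "\<one> X" "\<one> X"] by simp

lemma split1: "ar f \<Longrightarrow> ar g \<Longrightarrow> f \<otimes> g = (f \<otimes> \<one> (cd g)) \<cdot> (\<one> (dm f) \<otimes> g)"
  using interchange[of "\<one> (dm f)" f g "\<one> (cd g)"] by simp
lemma split2: "ar f \<Longrightarrow> ar g \<Longrightarrow> f \<otimes> g = (\<one> (cd f) \<otimes> g) \<cdot> (f \<otimes> \<one> (dm g))"
  using interchange[of f "\<one> (cd f)" "\<one> (dm g)" g] by simp

end



context SMC begin
lemma tail2: "a \<cdot> b = z \<Longrightarrow> ar a \<Longrightarrow> ar b \<Longrightarrow> dm a = cd b \<Longrightarrow> ar r \<Longrightarrow> cd r = dm b \<Longrightarrow> a \<cdot> (b \<cdot> r) = z \<cdot> r"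
  by (simp flip: comp_assoc)
lemma tail3: "a \<cdot> (b \<cdot> c) = z \<Longrightarrow> ar a \<Longrightarrow> ar b \<Longrightarrow> ar c \<Longrightarrow> dm a = cd b \<Longrightarrow> dm b = cd c \<Longrightarrow> ar r \<Longrightarrow> cd r = dm c \<Longrightarrow> a \<cdot> (b \<cdot> (c \<cdot> r)) = z \<cdot> r"
  by (drule sym) (simp)
lemma tail4: "a \<cdot> (b \<cdot> (c \<cdot> d)) = z \<Longrightarrow> ar a \<Longrightarrow> ar b \<Longrightarrow> ar c \<Longrightarrow> ar d \<Longrightarrow> dm a = cd b \<Longrightarrow> dm b = cd c \<Longrightarrow> dm c = cd d \<Longrightarrow> ar r \<Longrightarrow> cd r = dm d \<Longrightarrow> a \<cdot> (b \<cdot> (c \<cdot> (d \<cdot> r))) = z \<cdot> r"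
  by (drule sym) (simp)
lemma W: "P = Q \<Longrightarrow> \<one> X \<otimes> P \<otimes> \<one> Y = \<one> X \<otimes> Q \<otimes> \<one> Y" by simp
abbreviation L where "L X f Y \<equiv> \<one> X \<otimes> f \<otimes> \<one> Y"

lemma swap: "ar f \<Longrightarrow> ar g \<Longrightarrow> (\<one> (cd f) \<otimes> g) \<cdot> (f \<otimes> \<one> (dm g)) = (f \<otimes> \<one> (cd g)) \<cdot> (\<one> (dm f) \<otimes> g)"
  using split1 split2 by metis
end

locale WCC = SMC M for M :: "('o,'m) moncat" +
  fixes C V :: 'o and \<delta> \<epsilon> \<chi> \<tau> \<upsilon> :: 'm
  assumes wcc: "weak_crossed_coproduct_precounit M C \<delta> \<epsilon> V \<chi> \<tau> \<upsilon>"
begin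

abbreviation \<Gamma> where "\<Gamma> \<equiv> Gamma M C \<delta> \<epsilon> V \<chi>"
abbreviation chib where "chib \<equiv> (\<one> V \<otimes> \<epsilon>) \<cdot> \<chi>"
abbreviation gam where "gam \<equiv> gamma_ups M C \<delta> V \<upsilon>"
abbreviation dCV where "dCV \<equiv> delta_CV M C \<delta> V \<chi> \<tau>"

lemma ty[simp]: "ar \<delta>" "dm \<delta> = C" "cd \<delta> = C \<odot> C" "ar \<epsilon>" "dm \<epsilon> = C" "cd \<epsilon> = K"
  "ar \<chi>" "dm \<chi> = C \<odot> V" "cd \<chi> = V \<odot> C" "ar \<tau>" "dm \<tau> = C \<odot> V" "cd \<tau> = V \<odot> V"
  "ar \<upsilon>" "dm \<upsilon> = C \<odot> V" "cd \<upsilon> = K"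
  using wcc by (auto simp: weak_crossed_coproduct_precounit_def coalgebra_def hom_def)

lemma Gdef: "\<Gamma> = (\<one> (C \<odot> V) \<otimes> \<epsilon>) \<cdot> (\<one> C \<otimes> \<chi>) \<cdot> (\<delta> \<otimes> \<one> V)"
  by (simp add: Gamma_def)
lemma gdef: "gam = (\<one> C \<otimes> \<upsilon>) \<cdot> (\<delta> \<otimes> \<one> V)" by (simp add: gamma_ups_def)
lemma dCVdef: "dCV = (\<one> C \<otimes> \<chi> \<otimes> \<one> V) \<cdot> (\<delta> \<otimes> \<tau>) \<cdot> (\<delta> \<otimes> \<one> V)"
  by (simp add: delta_CV_def)

lemma coass: "(\<delta> \<otimes> \<one> C) \<cdot> \<delta> = (\<one> C \<otimes> \<delta>) \<cdot> \<delta>"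
  and cl: "(\<epsilon> \<otimes> \<one> C) \<cdot> \<delta> = \<one> C" and cr: "(\<one> C \<otimes> \<epsilon>) \<cdot> \<delta> = \<one> C"
  using wcc by (auto simp: weak_crossed_coproduct_precounit_def coalgebra_def)

lemma Hchi: "(\<chi> \<otimes> \<one> C) \<cdot> (\<one> C \<otimes> \<chi>) \<cdot> (\<delta> \<otimes> \<one> V) = (\<one> V \<otimes> \<delta>) \<cdot> \<chi>"
  and HtauG: "\<tau> \<cdot> \<Gamma> = \<tau>"
  and Htw: "(\<tau> \<otimes> \<one> C) \<cdot> (\<one> C \<otimes> \<chi>) \<cdot> (\<delta> \<otimes> \<one> V) = (\<one> V \<otimes> \<chi>) \<cdot> (\<chi> \<otimes> \<one> V) \<cdot> (\<one> C \<otimes> \<tau>) \<cdot> (\<delta> \<otimes> \<one> V)"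
  and Hp1: "(\<one> V \<otimes> \<upsilon>) \<cdot> (\<chi> \<otimes> \<one> V) \<cdot> (\<one> C \<otimes> \<tau>) \<cdot> (\<delta> \<otimes> \<one> V) = (\<epsilon> \<otimes> \<one> V) \<cdot> \<Gamma>"
  and Hp2: "(\<upsilon> \<otimes> \<one> V) \<cdot> (\<one> C \<otimes> \<tau>) \<cdot> (\<delta> \<otimes> \<one> V) = (\<epsilon> \<otimes> \<one> V) \<cdot> \<Gamma>"
  and Hp3: "(\<upsilon> \<otimes> \<one> C) \<cdot> (\<one> C \<otimes> \<chi>) \<cdot> (\<delta> \<otimes> \<one> V) = gam"
  using wcc unfolding weak_crossed_coproduct_precounit_def by (simp_all del: comp_assoc add: comp_assoc[symmetric])

lemma L1: "\<upsilon> \<cdot> \<Gamma> = \<upsilon>"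
proof -
  have "\<upsilon> \<cdot> \<Gamma> = (\<upsilon> \<otimes> \<epsilon>) \<cdot> (\<one> C \<otimes> \<chi>) \<cdot> (\<delta> \<otimes> \<one> V)" by (simp add: Gdef split1[of \<upsilon> \<epsilon>])
  also have "\<dots> = \<epsilon> \<cdot> ((\<upsilon> \<otimes> \<one> C) \<cdot> (\<one> C \<otimes> \<chi>) \<cdot> (\<delta> \<otimes> \<one> V))" by (simp add: split2[of \<upsilon> \<epsilon>])
  also have "\<dots> = \<epsilon> \<cdot> ((\<one> C \<otimes> \<upsilon>) \<cdot> (\<delta> \<otimes> \<one> V))" by (simp only: Hp3 gdef)
  also have "\<dots> = (\<epsilon> \<otimes> \<upsilon>) \<cdot> (\<delta> \<otimes> \<one> V)" by (simp add: split1[of \<epsilon> \<upsilon>])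
  also have "\<dots> = \<upsilon> \<cdot> (((\<epsilon> \<otimes> \<one> C) \<cdot> \<delta>) \<otimes> \<one> V)" by (simp add: split2[of \<epsilon> \<upsilon>])
  also have "\<dots> = \<upsilon>" by (simp add: cl)
  finally show ?thesis .
qed


lemma L2: "\<chi> \<cdot> \<Gamma> = \<chi>"
proof -
  have "\<chi> \<cdot> \<Gamma> = (\<chi> \<otimes> \<epsilon>) \<cdot> (\<one> C \<otimes> \<chi>) \<cdot> (\<delta> \<otimes> \<one> V)" by (simp add: Gdef split1[of \<chi> \<epsilon>])
  also have "\<dots> = (\<one> (V \<odot> C) \<otimes> \<epsilon>) \<cdot> ((\<chi> \<otimes> \<one> C) \<cdot> (\<one> C \<otimes> \<chi>) \<cdot> (\<delta> \<otimes> \<one> V))" by (simp add: split2[of \<chi> \<epsilon>])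
  also have "\<dots> = (\<one> (V \<odot> C) \<otimes> \<epsilon>) \<cdot> ((\<one> V \<otimes> \<delta>) \<cdot> \<chi>)" by (simp only: Hchi)
  also have "\<dots> = (\<one> V \<otimes> ((\<one> C \<otimes> \<epsilon>) \<cdot> \<delta>)) \<cdot> \<chi>" by simp
  also have "\<dots> = \<chi>" by (simp add: cr)
  finally show ?thesis .
qed

lemma L4: "(\<epsilon> \<otimes> \<one> V) \<cdot> \<Gamma> = chib"
proof -
  have "(\<epsilon> \<otimes> \<one> V) \<cdot> \<Gamma> = (\<epsilon> \<otimes> (\<one> V \<otimes> \<epsilon>)) \<cdot> (\<one> C \<otimes> \<chi>) \<cdot> (\<delta> \<otimes> \<one> V)" by (simp add: Gdef split1[of \<epsilon> "\<one> V \<otimes> \<epsilon>"])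
  also have "\<dots> = (\<one> V \<otimes> \<epsilon>) \<cdot> (\<epsilon> \<otimes> \<chi>) \<cdot> (\<delta> \<otimes> \<one> V)" by (simp add: split2[of \<epsilon> "\<one> V \<otimes> \<epsilon>"] split1[of \<epsilon> \<chi>])
  also have "\<dots> = chib \<cdot> (((\<epsilon> \<otimes> \<one> C) \<cdot> \<delta>) \<otimes> \<one> V)" by (simp add: split2[of \<epsilon> \<chi>])
  also have "\<dots> = chib" by (simp add: cl)
  finally show ?thesis .
qed

lemma GT[simp]: "ar \<Gamma>" "dm \<Gamma> = C \<odot> V" "cd \<Gamma> = C \<odot> V" by (simp_all add: Gdef)

lemma L3: "gam \<cdot> \<Gamma> = gam"
proof -
  have "gam \<cdot> \<Gamma> = (\<one> C \<otimes> \<upsilon>) \<cdot> (\<delta> \<otimes> (\<one> V \<otimes> \<epsilon>)) \<cdot> (\<one> C \<otimes> \<chi>) \<cdot> (\<delta> \<otimes> \<one> V)" by (simp add: gdef Gdef split1[of \<delta> "\<one> V \<otimes> \<epsilon>"])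
  also have "\<dots> = (\<one> C \<otimes> \<upsilon>) \<cdot> (\<one> (C \<odot> C \<odot> V) \<otimes> \<epsilon>) \<cdot> (\<delta> \<otimes> \<chi>) \<cdot> (\<delta> \<otimes> \<one> V)" by (simp add: split2[of \<delta> "\<one> V \<otimes> \<epsilon>"] split1[of \<delta> \<chi>])
  also have "\<dots> = (\<one> C \<otimes> \<upsilon>) \<cdot> (\<one> (C \<odot> C \<odot> V) \<otimes> \<epsilon>) \<cdot> (\<one> (C \<odot> C) \<otimes> \<chi>) \<cdot> (((\<delta> \<otimes> \<one> C) \<cdot> \<delta>) \<otimes> \<one> V)" by (simp add: split2[of \<delta> \<chi>])
  also have "\<dots> = (\<one> C \<otimes> \<upsilon>) \<cdot> (\<one> (C \<odot> C \<odot> V) \<otimes> \<epsilon>) \<cdot> (\<one> (C \<odot> C) \<otimes> \<chi>) \<cdot> (((\<one> C \<otimes> \<delta>) \<cdot> \<delta>) \<otimes> \<one> V)" by (simp only: coass)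
  also have "\<dots> = (\<one> C \<otimes> (\<upsilon> \<cdot> \<Gamma>)) \<cdot> (\<delta> \<otimes> \<one> V)" by (simp add: Gdef)
  also have "\<dots> = gam" by (simp add: L1 gdef)
  finally show ?thesis .
qed

lemma L5: "chib \<cdot> \<Gamma> = chib" by (simp add: L2)

lemma Hp2': "(\<upsilon> \<otimes> \<one> V) \<cdot> (\<one> C \<otimes> \<tau>) \<cdot> (\<delta> \<otimes> \<one> V) = chib" using Hp2 L4 by simp
lemma Hp1': "(\<one> V \<otimes> \<upsilon>) \<cdot> (\<chi> \<otimes> \<one> V) \<cdot> (\<one> C \<otimes> \<tau>) \<cdot> (\<delta> \<otimes> \<one> V) = chib" using Hp1 L4 by simp

lemma sw_dt: "(\<one> (C \<odot> C) \<otimes> \<tau>) \<cdot> (\<delta> \<otimes> \<one> (C \<odot> V)) = (\<delta> \<otimes> \<one> (V \<odot> V)) \<cdot> (\<one> C \<otimes> \<tau>)"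
  using swap[of \<delta> \<tau>] by simp

lemma dCVT[simp]: "ar dCV" "dm dCV = C \<odot> V" "cd dCV = C \<odot> V \<odot> C \<odot> V" by (simp_all add: dCVdef)
lemma gamT[simp]: "ar gam" "dm gam = C \<odot> V" "cd gam = C" by (simp_all add: gdef)

lemma R_a: "(\<delta> \<otimes> \<one> (V \<odot> C \<odot> V)) \<cdot> (\<one> C \<otimes> \<chi> \<otimes> \<one> V) = (\<one> (C \<odot> C) \<otimes> \<chi> \<otimes> \<one> V) \<cdot> (\<delta> \<otimes> \<one> (C \<odot> V \<odot> V))"
  using swap[of \<delta> "\<chi> \<otimes> \<one> V"] by simp
lemma R_b: "(\<delta> \<otimes> \<one> (C \<odot> V \<odot> V)) \<cdot> (\<one> (C \<odot> C) \<otimes> \<tau>) = (\<one> (C \<odot> C \<odot> C) \<otimes> \<tau>) \<cdot> (\<delta> \<otimes> \<one> (C \<odot> C \<odot> V))"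
  using swap[of \<delta> "\<one> C \<otimes> \<tau>"] by simp
lemma R_c: "(\<delta> \<otimes> \<one> (C \<odot> C \<odot> V)) \<cdot> (\<delta> \<otimes> \<one> (C \<odot> V)) = (\<one> C \<otimes> \<delta> \<otimes> \<one> (C \<odot> V)) \<cdot> (\<delta> \<otimes> \<one> (C \<odot> V))"
  using W[OF coass, of K "C \<odot> V"] by simp
lemma R_d: "(\<one> (C \<odot> C \<odot> C) \<otimes> \<tau>) \<cdot> (\<one> C \<otimes> \<delta> \<otimes> \<one> (C \<odot> V)) = (\<one> C \<otimes> \<delta> \<otimes> \<one> (V \<odot> V)) \<cdot> (\<one> (C \<odot> C) \<otimes> \<tau>)"
  using W[OF sw_dt, of C K] by simp
lemma R_e: "(\<one> C \<otimes> \<upsilon> \<otimes> \<one> (C \<odot> V)) \<cdot> (\<one> (C \<odot> C) \<otimes> \<chi> \<otimes> \<one> V) \<cdot> (\<one> C \<otimes> \<delta> \<otimes> \<one> (V \<odot> V)) = (\<one> (C \<odot> C) \<otimes> \<upsilon> \<otimes> \<one> V) \<cdot> (\<one> C \<otimes> \<delta> \<otimes> \<one> (V \<odot> V))"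
  using W[OF Hp3, of C V] by (simp add: gdef)
lemma R_g: "(\<delta> \<otimes> \<one> (C \<odot> V)) \<cdot> (\<delta> \<otimes> \<one> V) = (\<one> C \<otimes> \<delta> \<otimes> \<one> V) \<cdot> (\<delta> \<otimes> \<one> V)"
  using W[OF coass, of K V] by simp
lemma R_h: "(\<one> C \<otimes> \<delta> \<otimes> \<one> (C \<odot> V)) \<cdot> (\<one> C \<otimes> \<delta> \<otimes> \<one> V) = (\<one> (C \<odot> C) \<otimes> \<delta> \<otimes> \<one> V) \<cdot> (\<one> C \<otimes> \<delta> \<otimes> \<one> V)"
  using W[OF coass, of C V] by simp
lemma R_i: "(\<one> (C \<odot> C) \<otimes> \<upsilon> \<otimes> \<one> V) \<cdot> (\<one> (C \<odot> C \<odot> C) \<otimes> \<tau>) \<cdot> (\<one> (C \<odot> C) \<otimes> \<delta> \<otimes> \<one> V) = (\<one> (C \<odot> C \<odot> V) \<otimes> \<epsilon>) \<cdot> (\<one> (C \<odot> C) \<otimes> \<chi>)"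
  using W[OF Hp2', of "C \<odot> C" K] by simp

lemma U: "(gam \<otimes> chib) \<cdot> dCV = \<Gamma>"
proof -
  have "(gam \<otimes> chib) \<cdot> dCV = L (C\<odot>V) \<epsilon> K \<cdot> L C \<chi> K \<cdot> L C \<upsilon> (C\<odot>V) \<cdot> L K \<delta> (V\<odot>C\<odot>V) \<cdot> L C \<chi> V \<cdot> L (C\<odot>C) \<tau> K \<cdot> L K \<delta> (C\<odot>V) \<cdot> L K \<delta> V"
    by (simp add: gdef dCVdef split2[of "(\<one> C \<otimes> \<upsilon>) \<cdot> (\<delta> \<otimes> \<one> V)" "(\<one> V \<otimes> \<epsilon>) \<cdot> \<chi>"] split2[of \<delta> \<tau>])
  also have "\<dots> = L (C\<odot>V) \<epsilon> K \<cdot> L C \<chi> K \<cdot> L C \<upsilon> (C\<odot>V) \<cdot> L (C\<odot>C) \<chi> V \<cdot> L K \<delta> (C\<odot>V\<odot>V) \<cdot> L (C\<odot>C) \<tau> K \<cdot> L K \<delta> (C\<odot>V) \<cdot> L K \<delta> V"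
    by (simp add: R_a[THEN tail2])
  also have "\<dots> = L (C\<odot>V) \<epsilon> K \<cdot> L C \<chi> K \<cdot> L C \<upsilon> (C\<odot>V) \<cdot> L (C\<odot>C) \<chi> V \<cdot> L (C\<odot>C\<odot>C) \<tau> K \<cdot> L K \<delta> (C\<odot>C\<odot>V) \<cdot> L K \<delta> (C\<odot>V) \<cdot> L K \<delta> V"
    by (simp add: R_b[THEN tail2])
  also have "\<dots> = L (C\<odot>V) \<epsilon> K \<cdot> L C \<chi> K \<cdot> L C \<upsilon> (C\<odot>V) \<cdot> L (C\<odot>C) \<chi> V \<cdot> L (C\<odot>C\<odot>C) \<tau> K \<cdot> L C \<delta> (C\<odot>V) \<cdot> L K \<delta> (C\<odot>V) \<cdot> L K \<delta> V"
    by (simp add: R_c[THEN tail2])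
  also have "\<dots> = L (C\<odot>V) \<epsilon> K \<cdot> L C \<chi> K \<cdot> L C \<upsilon> (C\<odot>V) \<cdot> L (C\<odot>C) \<chi> V \<cdot> L C \<delta> (V\<odot>V) \<cdot> L (C\<odot>C) \<tau> K \<cdot> L K \<delta> (C\<odot>V) \<cdot> L K \<delta> V"
    by (simp add: R_d[THEN tail2])
  also have "\<dots> = L (C\<odot>V) \<epsilon> K \<cdot> L C \<chi> K \<cdot> L (C\<odot>C) \<upsilon> V \<cdot> L C \<delta> (V\<odot>V) \<cdot> L (C\<odot>C) \<tau> K \<cdot> L K \<delta> (C\<odot>V) \<cdot> L K \<delta> V"
    by (simp add: R_e[THEN tail3])
  also have "\<dots> = L (C\<odot>V) \<epsilon> K \<cdot> L C \<chi> K \<cdot> L (C\<odot>C) \<upsilon> V \<cdot> L (C\<odot>C\<odot>C) \<tau> K \<cdot> L C \<delta> (C\<odot>V) \<cdot> L K \<delta> (C\<odot>V) \<cdot> L K \<delta> V"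
    by (simp add: R_d[symmetric, THEN tail2])
  also have "\<dots> = L (C\<odot>V) \<epsilon> K \<cdot> L C \<chi> K \<cdot> L (C\<odot>C) \<upsilon> V \<cdot> L (C\<odot>C\<odot>C) \<tau> K \<cdot> L C \<delta> (C\<odot>V) \<cdot> L C \<delta> V \<cdot> L K \<delta> V"
    by (simp add: R_g)
  also have "\<dots> = L (C\<odot>V) \<epsilon> K \<cdot> L C \<chi> K \<cdot> L (C\<odot>C) \<upsilon> V \<cdot> L (C\<odot>C\<odot>C) \<tau> K \<cdot> L (C\<odot>C) \<delta> V \<cdot> L C \<delta> V \<cdot> L K \<delta> V"
    by (simp add: R_h[THEN tail2])
  also have "\<dots> = L (C\<odot>V) \<epsilon> K \<cdot> L C \<chi> K \<cdot> L (C\<odot>C\<odot>V) \<epsilon> K \<cdot> L (C\<odot>C) \<chi> K \<cdot> L C \<delta> V \<cdot> L K \<delta> V"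
    by (simp add: R_i[THEN tail3])
  also have "\<dots> = (\<one> C \<otimes> (chib \<cdot> \<Gamma>)) \<cdot> (\<delta> \<otimes> \<one> V)" by (simp add: Gdef)
  also have "\<dots> = (\<one> C \<otimes> chib) \<cdot> (\<delta> \<otimes> \<one> V)" by (simp only: L5)
  also have "\<dots> = \<Gamma>" by (simp add: Gdef)
  finally show ?thesis .
qed


lemma Hchi_e: "(\<one> V \<otimes> \<epsilon> \<otimes> \<one> C) \<cdot> (\<chi> \<otimes> \<one> C) \<cdot> (\<one> C \<otimes> \<chi>) \<cdot> (\<delta> \<otimes> \<one> V) = \<chi>"
proof -
  have "(\<one> V \<otimes> \<epsilon> \<otimes> \<one> C) \<cdot> ((\<chi> \<otimes> \<one> C) \<cdot> (\<one> C \<otimes> \<chi>) \<cdot> (\<delta> \<otimes> \<one> V)) = (\<one> V \<otimes> \<epsilon> \<otimes> \<one> C) \<cdot> ((\<one> V \<otimes> \<delta>) \<cdot> \<chi>)" by (simp only: Hchi)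
  also have "\<dots> = (\<one> V \<otimes> ((\<epsilon> \<otimes> \<one> C) \<cdot> \<delta>)) \<cdot> \<chi>" by simp
  also have "\<dots> = \<chi>" by (simp add: cl)
  finally show ?thesis .
qed
lemma R_x2: "(\<one> V \<otimes> \<epsilon> \<otimes> \<one> (C \<odot> V)) \<cdot> (\<chi> \<otimes> \<one> (C \<odot> V)) \<cdot> (\<one> C \<otimes> \<chi> \<otimes> \<one> V) \<cdot> (\<delta> \<otimes> \<one> (V \<odot> V)) = \<chi> \<otimes> \<one> V"
  using W[OF Hchi_e, of K V] by simp
lemma R_x3: "(\<one> V \<otimes> \<delta> \<otimes> \<one> V) \<cdot> (\<chi> \<otimes> \<one> V) = (\<chi> \<otimes> \<one> (C \<odot> V)) \<cdot> (\<one> C \<otimes> \<chi> \<otimes> \<one> V) \<cdot> (\<delta> \<otimes> \<one> (V \<odot> V))"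
  using W[OF Hchi, of K V] by simp
lemma R_x4: "(\<one> (V \<odot> C) \<otimes> \<upsilon>) \<cdot> (\<chi> \<otimes> \<one> (C \<odot> V)) = \<chi> \<cdot> (\<one> (C \<odot> V) \<otimes> \<upsilon>)"
  using swap[of \<chi> \<upsilon>] by simp
lemma R_t: "(\<one> (V \<odot> V) \<otimes> \<epsilon>) \<cdot> (\<tau> \<otimes> \<one> C) = \<tau> \<cdot> (\<one> (C \<odot> V) \<otimes> \<epsilon>)"
  using swap[of \<tau> \<epsilon>] by simp

lemma X: "(chib \<otimes> gam) \<cdot> dCV = \<chi>"
proof -
  have "(chib \<otimes> gam) \<cdot> dCV = L (V\<odot>C) \<upsilon> K \<cdot> L V \<delta> V \<cdot> L V \<epsilon> (C\<odot>V) \<cdot> L K \<chi> (C\<odot>V) \<cdot> L C \<chi> V \<cdot> L (C\<odot>C) \<tau> K \<cdot> L K \<delta> (C\<odot>V) \<cdot> L K \<delta> V"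
    by (simp add: gdef dCVdef split2[of "(\<one> V \<otimes> \<epsilon>) \<cdot> \<chi>" "(\<one> C \<otimes> \<upsilon>) \<cdot> (\<delta> \<otimes> \<one> V)"] split2[of \<delta> \<tau>])
  also have "\<dots> = L (V\<odot>C) \<upsilon> K \<cdot> L V \<delta> V \<cdot> L V \<epsilon> (C\<odot>V) \<cdot> L K \<chi> (C\<odot>V) \<cdot> L C \<chi> V \<cdot> L K \<delta> (V\<odot>V) \<cdot> L C \<tau> K \<cdot> L K \<delta> V"
    by (simp add: sw_dt[THEN tail2])
  also have "\<dots> = L (V\<odot>C) \<upsilon> K \<cdot> L V \<delta> V \<cdot> L K \<chi> V \<cdot> L C \<tau> K \<cdot> L K \<delta> V"
    by (simp add: R_x2[THEN tail4])
  also have "\<dots> = L (V\<odot>C) \<upsilon> K \<cdot> L K \<chi> (C\<odot>V) \<cdot> L C \<chi> V \<cdot> L K \<delta> (V\<odot>V) \<cdot> L C \<tau> K \<cdot> L K \<delta> V"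
    by (simp add: R_x3[THEN tail2])
  also have "\<dots> = \<chi> \<cdot> L (C\<odot>V) \<upsilon> K \<cdot> L C \<chi> V \<cdot> L K \<delta> (V\<odot>V) \<cdot> L C \<tau> K \<cdot> L K \<delta> V"
    by (simp add: R_x4[THEN tail2])
  also have "\<dots> = \<chi> \<cdot> L (C\<odot>V) \<upsilon> K \<cdot> L C \<chi> V \<cdot> L (C\<odot>C) \<tau> K \<cdot> L K \<delta> (C\<odot>V) \<cdot> L K \<delta> V"
    by (simp add: sw_dt[symmetric, THEN tail2])
  also have "\<dots> = \<chi> \<cdot> L (C\<odot>V) \<upsilon> K \<cdot> L C \<chi> V \<cdot> L (C\<odot>C) \<tau> K \<cdot> L C \<delta> V \<cdot> L K \<delta> V"
    by (simp add: R_g)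
  also have "\<dots> = \<chi> \<cdot> ((\<one> C \<otimes> ((\<one> V \<otimes> \<upsilon>) \<cdot> (\<chi> \<otimes> \<one> V) \<cdot> (\<one> C \<otimes> \<tau>) \<cdot> (\<delta> \<otimes> \<one> V))) \<cdot> (\<delta> \<otimes> \<one> V))"
    by simp
  also have "\<dots> = \<chi> \<cdot> ((\<one> C \<otimes> chib) \<cdot> (\<delta> \<otimes> \<one> V))" by (simp only: Hp1')
  also have "\<dots> = \<chi> \<cdot> \<Gamma>" by (simp add: Gdef)
  also have "\<dots> = \<chi>" by (simp add: L2)
  finally show ?thesis .
qed

lemma T: "(chib \<otimes> chib) \<cdot> dCV = \<tau>"
proof -
  have "(chib \<otimes> chib) \<cdot> dCV = L (V\<odot>V) \<epsilon> K \<cdot> L V \<chi> K \<cdot> L V \<epsilon> (C\<odot>V) \<cdot> L K \<chi> (C\<odot>V) \<cdot> L C \<chi> V \<cdot> L (C\<odot>C) \<tau> K \<cdot> L K \<delta> (C\<odot>V) \<cdot> L K \<delta> V"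
    by (simp add: dCVdef split2[of "(\<one> V \<otimes> \<epsilon>) \<cdot> \<chi>" "(\<one> V \<otimes> \<epsilon>) \<cdot> \<chi>"] split2[of \<delta> \<tau>])
  also have "\<dots> = L (V\<odot>V) \<epsilon> K \<cdot> L V \<chi> K \<cdot> L V \<epsilon> (C\<odot>V) \<cdot> L K \<chi> (C\<odot>V) \<cdot> L C \<chi> V \<cdot> L K \<delta> (V\<odot>V) \<cdot> L C \<tau> K \<cdot> L K \<delta> V"
    by (simp add: sw_dt[THEN tail2])
  also have "\<dots> = L (V\<odot>V) \<epsilon> K \<cdot> L V \<chi> K \<cdot> L K \<chi> V \<cdot> L C \<tau> K \<cdot> L K \<delta> V"
    by (simp add: R_x2[THEN tail4])
  also have "\<dots> = (\<one> (V \<odot> V) \<otimes> \<epsilon>) \<cdot> ((\<one> V \<otimes> \<chi>) \<cdot> (\<chi> \<otimes> \<one> V) \<cdot> (\<one> C \<otimes> \<tau>) \<cdot> (\<delta> \<otimes> \<one> V))" by simp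
  also have "\<dots> = (\<one> (V \<odot> V) \<otimes> \<epsilon>) \<cdot> ((\<tau> \<otimes> \<one> C) \<cdot> (\<one> C \<otimes> \<chi>) \<cdot> (\<delta> \<otimes> \<one> V))" by (simp only: Htw)
  also have "\<dots> = \<tau> \<cdot> \<Gamma>" by (simp add: Gdef R_t[THEN tail2])
  also have "\<dots> = \<tau>" by (simp add: HtauG)
  finally show ?thesis .
qed

end



locale MAIN = WCC M C V \<delta> \<epsilon> \<chi> \<tau> \<upsilon> for M :: "('o,'m) moncat" and C V \<delta> \<epsilon> \<chi> \<tau> \<upsilon> +
  fixes D :: 'o and \<delta>D \<epsilon>D pC pV :: 'm
  assumes coalgD: "coalgebra M D \<delta>D \<epsilon>D"
    and pCm: "coalgebra_morphism M D \<delta>D \<epsilon>D C \<delta> \<epsilon> pC"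
    and pVh: "hom M pV D V"
begin

abbreviation q where "q \<equiv> (pC \<otimes> \<one> V) \<cdot> (\<one> D \<otimes> pV) \<cdot> \<delta>D"

lemma tyD[simp]: "ar \<delta>D" "dm \<delta>D = D" "cd \<delta>D = D \<odot> D" "ar \<epsilon>D" "dm \<epsilon>D = D" "cd \<epsilon>D = K"
  "ar pC" "dm pC = D" "cd pC = C" "ar pV" "dm pV = D" "cd pV = V"
  using coalgD pCm pVh by (auto simp: coalgebra_def coalgebra_morphism_def hom_def)

lemma coassD: "(\<delta>D \<otimes> \<one> D) \<cdot> \<delta>D = (\<one> D \<otimes> \<delta>D) \<cdot> \<delta>D"
  and clD: "(\<epsilon>D \<otimes> \<one> D) \<cdot> \<delta>D = \<one> D" and crD: "(\<one> D \<otimes> \<epsilon>D) \<cdot> \<delta>D = \<one> D"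
  using coalgD by (auto simp: coalgebra_def)

lemma mC: "\<delta> \<cdot> pC = (pC \<otimes> \<one> C) \<cdot> (\<one> D \<otimes> pC) \<cdot> \<delta>D"
proof -
  have "(pC \<otimes> pC) \<cdot> \<delta>D = \<delta> \<cdot> pC" using pCm by (simp add: coalgebra_morphism_def)
  thus ?thesis by (simp add: split1[of pC pC])
qed
lemma eC: "\<epsilon> \<cdot> pC = \<epsilon>D" using pCm by (simp add: coalgebra_morphism_def)

lemma pCpV: "pC \<otimes> pV = (pC \<otimes> \<one> V) \<cdot> (\<one> D \<otimes> pV)" by (simp add: split1[of pC pV])

lemma P1: "(\<delta> \<otimes> \<one> V) \<cdot> (pC \<otimes> \<one> V) = (pC \<otimes> \<one> (C \<odot> V)) \<cdot> (\<one> D \<otimes> pC \<otimes> \<one> V) \<cdot> (\<delta>D \<otimes> \<one> V)"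
  using W[OF mC, of K V] by simp
lemma P2: "(\<delta>D \<otimes> \<one> V) \<cdot> (\<one> D \<otimes> pV) = (\<one> (D \<odot> D) \<otimes> pV) \<cdot> (\<delta>D \<otimes> \<one> D)"
  using swap[of \<delta>D pV] by simp

lemma Q2: assumes F: "ar F" "dm F = C \<odot> V"
  shows "(\<one> C \<otimes> F) \<cdot> ((\<delta> \<otimes> \<one> V) \<cdot> q) = (pC \<otimes> \<one> (cd F)) \<cdot> ((\<one> D \<otimes> (F \<cdot> q)) \<cdot> \<delta>D)"
proof -
  have s: "(\<one> C \<otimes> F) \<cdot> (pC \<otimes> \<one> (C \<odot> V)) = (pC \<otimes> \<one> (cd F)) \<cdot> (\<one> D \<otimes> F)"
    using swap[of pC F] F by simp
  show ?thesis using F by (simp add: P1[THEN tail2] P2[THEN tail2] coassD s[THEN tail2])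
qed

lemma E3: "(\<epsilon> \<otimes> \<one> V) \<cdot> q = pV"
proof -
  have "(\<epsilon> \<otimes> \<one> V) \<cdot> q = ((\<epsilon> \<cdot> pC) \<otimes> \<one> V) \<cdot> (\<one> D \<otimes> pV) \<cdot> \<delta>D" by simp
  also have "\<dots> = (\<epsilon>D \<otimes> \<one> V) \<cdot> (\<one> D \<otimes> pV) \<cdot> \<delta>D" by (simp only: eC)
  also have "\<dots> = pV \<cdot> ((\<epsilon>D \<otimes> \<one> D) \<cdot> \<delta>D)"
  proof -
    have s: "(\<epsilon>D \<otimes> \<one> V) \<cdot> (\<one> D \<otimes> pV) = pV \<cdot> (\<epsilon>D \<otimes> \<one> D)" using swap[of \<epsilon>D pV] by simp
    show ?thesis by (simp add: s[THEN tail2])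
  qed
  also have "\<dots> = pV" by (simp add: clD)
  finally show ?thesis .
qed

abbreviation G where "G \<equiv> (\<chi> \<otimes> \<one> V) \<cdot> (\<one> C \<otimes> \<tau>) \<cdot> (\<delta> \<otimes> \<one> V)"

lemma DG: "dCV = (\<one> C \<otimes> G) \<cdot> (\<delta> \<otimes> \<one> V)"
  by (simp add: dCVdef split1[of \<delta> \<tau>] sw_dt[symmetric, THEN tail2] R_g)

end

locale MAINH = MAIN +
  assumes h1: "\<upsilon> \<cdot> q = \<epsilon>D"
    and h2: "\<chi> \<cdot> q = (pV \<otimes> \<one> C) \<cdot> (\<one> D \<otimes> pC) \<cdot> \<delta>D"
    and h3: "\<tau> \<cdot> q = (pV \<otimes> \<one> V) \<cdot> (\<one> D \<otimes> pV) \<cdot> \<delta>D"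
begin

lemma E2: "gam \<cdot> q = pC"
proof -
  have "gam \<cdot> q = (\<one> C \<otimes> \<upsilon>) \<cdot> ((\<delta> \<otimes> \<one> V) \<cdot> q)" by (simp add: gdef)
  also have "\<dots> = pC \<cdot> ((\<one> D \<otimes> (\<upsilon> \<cdot> q)) \<cdot> \<delta>D)" using Q2[of \<upsilon>] by simp
  also have "\<dots> = pC" by (simp only: h1 crD comp_idr tyD)
  finally show ?thesis .
qed

lemma Cb: "chib \<cdot> q = pV"
proof -
  have "chib \<cdot> q = (\<one> V \<otimes> \<epsilon>) \<cdot> (\<chi> \<cdot> q)" by simp
  also have "\<dots> = (\<one> V \<otimes> \<epsilon>) \<cdot> ((pV \<otimes> \<one> C) \<cdot> (\<one> D \<otimes> pC) \<cdot> \<delta>D)" by (simp only: h2)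
  also have "\<dots> = pV \<cdot> ((\<one> D \<otimes> (\<epsilon> \<cdot> pC)) \<cdot> \<delta>D)"
  proof -
    have s: "(\<one> V \<otimes> \<epsilon>) \<cdot> (pV \<otimes> \<one> C) = pV \<cdot> (\<one> D \<otimes> \<epsilon>)" using swap[of pV \<epsilon>] by simp
    show ?thesis by (simp add: s[THEN tail2])
  qed
  also have "\<dots> = pV" by (simp only: eC crD) simp
  finally show ?thesis .
qed

lemma E1: "\<Gamma> \<cdot> q = q"
proof -
  have "\<Gamma> \<cdot> q = (\<one> C \<otimes> chib) \<cdot> ((\<delta> \<otimes> \<one> V) \<cdot> q)" by (simp add: Gdef)
  also have "\<dots> = (pC \<otimes> \<one> V) \<cdot> ((\<one> D \<otimes> (chib \<cdot> q)) \<cdot> \<delta>D)" using Q2[of chib] by simp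
  also have "\<dots> = q" by (simp only: Cb)
  finally show ?thesis .
qed


lemma Gq: "G \<cdot> q = (\<one> (V \<odot> C) \<otimes> pV) \<cdot> (pV \<otimes> \<one> (C \<odot> D)) \<cdot> (\<one> D \<otimes> pC \<otimes> \<one> D) \<cdot> (\<delta>D \<otimes> \<one> D) \<cdot> \<delta>D"
proof -
  have sw1: "(\<one> D \<otimes> pV \<otimes> \<one> V) \<cdot> (\<one> (D \<odot> D) \<otimes> pV) = (\<one> (D \<odot> V) \<otimes> pV) \<cdot> (\<one> D \<otimes> pV \<otimes> \<one> D)"
    using W[OF swap[of pV pV], of D K] by simp
  have sw2: "(pC \<otimes> \<one> (V \<odot> V)) \<cdot> (\<one> (D \<odot> V) \<otimes> pV) = (\<one> (C \<odot> V) \<otimes> pV) \<cdot> (pC \<otimes> \<one> (V \<odot> D))"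
    using swap[of pC "\<one> V \<otimes> pV"] by simp
  have sw3: "(\<chi> \<otimes> \<one> V) \<cdot> (\<one> (C \<odot> V) \<otimes> pV) = (\<one> (V \<odot> C) \<otimes> pV) \<cdot> (\<chi> \<otimes> \<one> D)"
    using swap[of \<chi> pV] by simp
  have h2D: "(\<chi> \<otimes> \<one> D) \<cdot> (pC \<otimes> \<one> (V \<odot> D)) \<cdot> (\<one> D \<otimes> pV \<otimes> \<one> D) \<cdot> (\<delta>D \<otimes> \<one> D) = (pV \<otimes> \<one> (C \<odot> D)) \<cdot> (\<one> D \<otimes> pC \<otimes> \<one> D) \<cdot> (\<delta>D \<otimes> \<one> D)"
    using W[OF h2, of K D] by simp
  have "G \<cdot> q = (\<chi> \<otimes> \<one> V) \<cdot> ((\<one> C \<otimes> \<tau>) \<cdot> ((\<delta> \<otimes> \<one> V) \<cdot> q))" by simp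
  also have "\<dots> = (\<chi> \<otimes> \<one> V) \<cdot> ((pC \<otimes> \<one> (V \<odot> V)) \<cdot> ((\<one> D \<otimes> (\<tau> \<cdot> q)) \<cdot> \<delta>D))" using Q2[of \<tau>] by simp
  also have "\<dots> = (\<chi> \<otimes> \<one> V) \<cdot> ((pC \<otimes> \<one> (V \<odot> V)) \<cdot> ((\<one> D \<otimes> ((pV \<otimes> \<one> V) \<cdot> (\<one> D \<otimes> pV) \<cdot> \<delta>D)) \<cdot> \<delta>D))" by (simp only: h3)
  also have "\<dots> = (\<one> (V \<odot> C) \<otimes> pV) \<cdot> (pV \<otimes> \<one> (C \<odot> D)) \<cdot> (\<one> D \<otimes> pC \<otimes> \<one> D) \<cdot> (\<delta>D \<otimes> \<one> D) \<cdot> \<delta>D"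
    by (simp add: sw1[THEN tail2] sw2[THEN tail2] sw3[THEN tail2] coassD[symmetric] h2D[THEN tail4])
  finally show ?thesis .
qed

lemma E4: "dCV \<cdot> q = (q \<otimes> q) \<cdot> \<delta>D"
proof -
  have sA: "(\<one> (D \<odot> V \<odot> C) \<otimes> pV) \<cdot> (\<one> D \<otimes> pV \<otimes> \<one> (C \<odot> D)) = (\<one> D \<otimes> pV \<otimes> \<one> (C \<odot> V)) \<cdot> (\<one> (D \<odot> D \<odot> C) \<otimes> pV)"
    using W[OF swap[of pV "\<one> C \<otimes> pV"], of D K] by simp
  have sB: "(\<one> (D \<odot> D \<odot> C) \<otimes> pV) \<cdot> (\<one> (D \<odot> D) \<otimes> pC \<otimes> \<one> D) = (\<one> (D \<odot> D) \<otimes> pC \<otimes> \<one> V) \<cdot> (\<one> (D \<odot> D \<odot> D) \<otimes> pV)"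
    using W[OF swap[of pC pV], of "D \<odot> D" K] by simp
  have c1: "(\<one> D \<otimes> \<delta>D \<otimes> \<one> D) \<cdot> (\<one> D \<otimes> \<delta>D) = (\<one> (D \<odot> D) \<otimes> \<delta>D) \<cdot> (\<one> D \<otimes> \<delta>D)"
    using W[OF coassD, of D K] by simp
  have c3: "(\<one> (D \<odot> D) \<otimes> \<delta>D) \<cdot> (\<delta>D \<otimes> \<one> D) = (\<delta>D \<otimes> \<one> (D \<odot> D)) \<cdot> (\<one> D \<otimes> \<delta>D)"
    using swap[of \<delta>D \<delta>D] by simp
  have sC: "(\<one> (D \<odot> D \<odot> D) \<otimes> pV) \<cdot> (\<delta>D \<otimes> \<one> (D \<odot> D)) = (\<delta>D \<otimes> \<one> (D \<odot> V)) \<cdot> (\<one> (D \<odot> D) \<otimes> pV)"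
    using swap[of \<delta>D "\<one> D \<otimes> pV"] by simp
  have sD: "(\<one> (D \<odot> D) \<otimes> pC \<otimes> \<one> V) \<cdot> (\<delta>D \<otimes> \<one> (D \<odot> V)) = (\<delta>D \<otimes> \<one> (C \<odot> V)) \<cdot> (\<one> D \<otimes> pC \<otimes> \<one> V)"
    using swap[of \<delta>D "pC \<otimes> \<one> V"] by simp
  have GT: "ar G" "dm G = C \<odot> V" "cd G = V \<odot> C \<odot> V" by simp_all
  have "dCV \<cdot> q = (\<one> C \<otimes> G) \<cdot> ((\<delta> \<otimes> \<one> V) \<cdot> q)" by (simp add: DG)
  also have "\<dots> = (pC \<otimes> \<one> (V \<odot> C \<odot> V)) \<cdot> ((\<one> D \<otimes> (G \<cdot> q)) \<cdot> \<delta>D)" using Q2[of G] GT by simp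
  also have "\<dots> = (pC \<otimes> \<one> (V \<odot> C \<odot> V)) \<cdot> ((\<one> D \<otimes> ((\<one> (V \<odot> C) \<otimes> pV) \<cdot> (pV \<otimes> \<one> (C \<odot> D)) \<cdot> (\<one> D \<otimes> pC \<otimes> \<one> D) \<cdot> (\<delta>D \<otimes> \<one> D) \<cdot> \<delta>D)) \<cdot> \<delta>D)"
    by (simp only: Gq)
  also have "\<dots> = L K pC (V\<odot>C\<odot>V) \<cdot> L D pV (C\<odot>V) \<cdot> L (D\<odot>D) pC V \<cdot> L (D\<odot>D\<odot>D) pV K \<cdot> L (D\<odot>D) \<delta>D K \<cdot> L D \<delta>D K \<cdot> \<delta>D"
    by (simp add: sA[THEN tail2] sB[THEN tail2] c1[THEN tail2])
  also have "\<dots> = L K pC (V\<odot>C\<odot>V) \<cdot> L D pV (C\<odot>V) \<cdot> L (D\<odot>D) pC V \<cdot> L (D\<odot>D\<odot>D) pV K \<cdot> L (D\<odot>D) \<delta>D K \<cdot> L K \<delta>D D \<cdot> \<delta>D"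
    by (simp add: coassD)
  also have "\<dots> = (q \<otimes> q) \<cdot> \<delta>D"
    by (simp add: c3[THEN tail2] sC[THEN tail2] sD[THEN tail2] split1[of q q])
  finally show ?thesis .
qed

end



locale FULL = MAIN M C V \<delta> \<epsilon> \<chi> \<tau> \<upsilon> D \<delta>D \<epsilon>D pC pV
  for M :: "('o,'m) moncat" and C V \<delta> \<epsilon> \<chi> \<tau> \<upsilon> D \<delta>D \<epsilon>D pC pV +
  fixes S :: 'o and i p :: 'm
  assumes ih: "hom M i S (C \<odot> V)" and ph: "hom M p (C \<odot> V) S"
    and ip: "i \<cdot> p = \<Gamma>" and pi: "p \<cdot> i = \<one> S"
begin

lemma tyF[simp]: "ar i" "dm i = S" "cd i = C \<odot> V" "ar p" "dm p = C \<odot> V" "cd p = S"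
  using ih ph by (auto simp: hom_def)

abbreviation Dl where "Dl \<equiv> ((p \<otimes> p) \<cdot> dCV) \<cdot> i"
abbreviation cm where "cm w \<equiv> coalgebra_morphism M D \<delta>D \<epsilon>D S Dl (\<upsilon> \<cdot> i) w"

lemma cmT: assumes "cm w" shows "ar w" "dm w = D" "cd w = S"
  using assms by (auto simp: coalgebra_morphism_def hom_def)

lemma gen: assumes w: "cm w" and F: "ar F" "dm F = S" and G': "ar G'" "dm G' = S"
  shows "((((F \<cdot> p) \<otimes> (G' \<cdot> p)) \<cdot> dCV) \<cdot> (i \<cdot> w)) = ((F \<cdot> w) \<otimes> (G' \<cdot> w)) \<cdot> \<delta>D"
proof -
  note wt = cmT[OF w]
  have i1: "(F \<cdot> p) \<otimes> (G' \<cdot> p) = (F \<otimes> G') \<cdot> (p \<otimes> p)" using F G' by (intro interchange) simp_all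
  have i2: "(F \<cdot> w) \<otimes> (G' \<cdot> w) = (F \<otimes> G') \<cdot> (w \<otimes> w)" using F G' wt by (intro interchange) simp_all
  have c: "(w \<otimes> w) \<cdot> \<delta>D = Dl \<cdot> w" using w by (simp add: coalgebra_morphism_def)
  have c': "(p \<otimes> p) \<cdot> (dCV \<cdot> (i \<cdot> w)) = (w \<otimes> w) \<cdot> \<delta>D" using c wt by simp
  show ?thesis using F G' wt by (simp add: i1 i2 c')
qed

lemma Kl: assumes w: "cm w" and a: "(gam \<cdot> i) \<cdot> w = pC" and b: "((\<epsilon> \<otimes> \<one> V) \<cdot> i) \<cdot> w = pV"
  shows "i \<cdot> w = q"
proof -
  note wt = cmT[OF w]
  have Gi: "\<Gamma> = (((gam \<cdot> i) \<cdot> p) \<otimes> (((\<epsilon> \<otimes> \<one> V) \<cdot> i) \<cdot> p)) \<cdot> dCV"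
  proof -
    have a1: "(gam \<cdot> i) \<cdot> p = gam \<cdot> \<Gamma>" using ip by simp
    have b1: "((\<epsilon> \<otimes> \<one> V) \<cdot> i) \<cdot> p = (\<epsilon> \<otimes> \<one> V) \<cdot> \<Gamma>" using ip by simp
    show ?thesis by (simp only: a1 b1 L3 L4 U)
  qed
  have "i \<cdot> w = \<Gamma> \<cdot> (i \<cdot> w)"
  proof -
    have "\<Gamma> \<cdot> (i \<cdot> w) = i \<cdot> ((p \<cdot> i) \<cdot> w)" using wt by (simp flip: ip)
    thus ?thesis using wt by (simp add: pi)
  qed
  also have "\<dots> = ((((gam \<cdot> i) \<cdot> p) \<otimes> (((\<epsilon> \<otimes> \<one> V) \<cdot> i) \<cdot> p)) \<cdot> dCV) \<cdot> (i \<cdot> w)" by (simp only: Gi)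
  also have "\<dots> = (((gam \<cdot> i) \<cdot> w) \<otimes> (((\<epsilon> \<otimes> \<one> V) \<cdot> i) \<cdot> w)) \<cdot> \<delta>D" by (rule gen[OF w]) simp_all
  also have "\<dots> = (pC \<otimes> pV) \<cdot> \<delta>D" by (simp only: a b)
  also have "\<dots> = q" by (simp add: pCpV)
  finally show ?thesis .
qed


lemma chi_i: assumes w: "cm w" and a: "(gam \<cdot> i) \<cdot> w = pC" and b: "((\<epsilon> \<otimes> \<one> V) \<cdot> i) \<cdot> w = pV"
  shows "\<chi> \<cdot> (i \<cdot> w) = (pV \<otimes> pC) \<cdot> \<delta>D"
proof -
  have Xi: "\<chi> = ((((\<epsilon> \<otimes> \<one> V) \<cdot> i) \<cdot> p) \<otimes> ((gam \<cdot> i) \<cdot> p)) \<cdot> dCV"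
  proof -
    have a1: "(gam \<cdot> i) \<cdot> p = gam \<cdot> \<Gamma>" using ip by simp
    have b1: "((\<epsilon> \<otimes> \<one> V) \<cdot> i) \<cdot> p = (\<epsilon> \<otimes> \<one> V) \<cdot> \<Gamma>" using ip by simp
    show ?thesis by (simp only: a1 b1 L3 L4 X)
  qed
  have "\<chi> \<cdot> (i \<cdot> w) = ((((((\<epsilon> \<otimes> \<one> V) \<cdot> i) \<cdot> p) \<otimes> ((gam \<cdot> i) \<cdot> p)) \<cdot> dCV) \<cdot> (i \<cdot> w))"
    by (subst Xi) (rule refl)
  also have "\<dots> = ((((\<epsilon> \<otimes> \<one> V) \<cdot> i) \<cdot> w) \<otimes> ((gam \<cdot> i) \<cdot> w)) \<cdot> \<delta>D" by (rule gen[OF w]) simp_all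
  also have "\<dots> = (pV \<otimes> pC) \<cdot> \<delta>D" by (simp only: a b)
  finally show ?thesis .
qed

lemma tau_i: assumes w: "cm w" and b: "((\<epsilon> \<otimes> \<one> V) \<cdot> i) \<cdot> w = pV"
  shows "\<tau> \<cdot> (i \<cdot> w) = (pV \<otimes> pV) \<cdot> \<delta>D"
proof -
  have Ti: "\<tau> = ((((\<epsilon> \<otimes> \<one> V) \<cdot> i) \<cdot> p) \<otimes> (((\<epsilon> \<otimes> \<one> V) \<cdot> i) \<cdot> p)) \<cdot> dCV"
  proof -
    have b1: "((\<epsilon> \<otimes> \<one> V) \<cdot> i) \<cdot> p = (\<epsilon> \<otimes> \<one> V) \<cdot> \<Gamma>" using ip by simp
    show ?thesis by (simp only: b1 L4 T)
  qed
  have "\<tau> \<cdot> (i \<cdot> w) = ((((((\<epsilon> \<otimes> \<one> V) \<cdot> i) \<cdot> p) \<otimes> (((\<epsilon> \<otimes> \<one> V) \<cdot> i) \<cdot> p)) \<cdot> dCV) \<cdot> (i \<cdot> w))"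
    by (subst Ti) (rule refl)
  also have "\<dots> = ((((\<epsilon> \<otimes> \<one> V) \<cdot> i) \<cdot> w) \<otimes> (((\<epsilon> \<otimes> \<one> V) \<cdot> i) \<cdot> w)) \<cdot> \<delta>D" by (rule gen[OF w]) simp_all
  also have "\<dots> = (pV \<otimes> pV) \<cdot> \<delta>D" by (simp only: b)
  finally show ?thesis .
qed

lemma main:
  "(\<exists>\<omega>. (cm \<omega> \<and> (gam \<cdot> i) \<cdot> \<omega> = pC \<and> ((\<epsilon> \<otimes> \<one> V) \<cdot> i) \<cdot> \<omega> = pV)
      \<and> (\<forall>\<omega>'. cm \<omega>' \<and> (gam \<cdot> i) \<cdot> \<omega>' = pC \<and> ((\<epsilon> \<otimes> \<one> V) \<cdot> i) \<cdot> \<omega>' = pV \<longrightarrow> \<omega>' = \<omega>))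
   \<longleftrightarrow> ((\<upsilon> \<cdot> (pC \<otimes> pV)) \<cdot> \<delta>D = \<epsilon>D
      \<and> (\<chi> \<cdot> (pC \<otimes> pV)) \<cdot> \<delta>D = (pV \<otimes> pC) \<cdot> \<delta>D
      \<and> (\<tau> \<cdot> (pC \<otimes> pV)) \<cdot> \<delta>D = (pV \<otimes> pV) \<cdot> \<delta>D)"
proof
  assume "\<exists>\<omega>. (cm \<omega> \<and> (gam \<cdot> i) \<cdot> \<omega> = pC \<and> ((\<epsilon> \<otimes> \<one> V) \<cdot> i) \<cdot> \<omega> = pV)
      \<and> (\<forall>\<omega>'. cm \<omega>' \<and> (gam \<cdot> i) \<cdot> \<omega>' = pC \<and> ((\<epsilon> \<otimes> \<one> V) \<cdot> i) \<cdot> \<omega>' = pV \<longrightarrow> \<omega>' = \<omega>)"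
  then obtain w where w: "cm w" and a: "(gam \<cdot> i) \<cdot> w = pC" and b: "((\<epsilon> \<otimes> \<one> V) \<cdot> i) \<cdot> w = pV" by blast
  note wt = cmT[OF w]
  have iw: "i \<cdot> w = q" by (rule Kl[OF w a b])
  have qq: "(pC \<otimes> pV) \<cdot> \<delta>D = i \<cdot> w" using iw by (simp add: pCpV)
  have e: "(\<upsilon> \<cdot> i) \<cdot> w = \<epsilon>D" using w by (simp add: coalgebra_morphism_def)
  have 1: "(\<upsilon> \<cdot> (pC \<otimes> pV)) \<cdot> \<delta>D = \<epsilon>D"
  proof -
    have "(\<upsilon> \<cdot> (pC \<otimes> pV)) \<cdot> \<delta>D = \<upsilon> \<cdot> ((pC \<otimes> pV) \<cdot> \<delta>D)" by simp
    also have "\<dots> = \<upsilon> \<cdot> (i \<cdot> w)" by (simp only: qq)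
    also have "\<dots> = \<epsilon>D" using e wt by simp
    finally show ?thesis .
  qed
  have 2: "(\<chi> \<cdot> (pC \<otimes> pV)) \<cdot> \<delta>D = (pV \<otimes> pC) \<cdot> \<delta>D"
  proof -
    have "(\<chi> \<cdot> (pC \<otimes> pV)) \<cdot> \<delta>D = \<chi> \<cdot> ((pC \<otimes> pV) \<cdot> \<delta>D)" by simp
    also have "\<dots> = \<chi> \<cdot> (i \<cdot> w)" by (simp only: qq)
    also have "\<dots> = (pV \<otimes> pC) \<cdot> \<delta>D" by (rule chi_i[OF w a b])
    finally show ?thesis .
  qed
  have 3: "(\<tau> \<cdot> (pC \<otimes> pV)) \<cdot> \<delta>D = (pV \<otimes> pV) \<cdot> \<delta>D"
  proof -
    have "(\<tau> \<cdot> (pC \<otimes> pV)) \<cdot> \<delta>D = \<tau> \<cdot> ((pC \<otimes> pV) \<cdot> \<delta>D)" by simp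
    also have "\<dots> = \<tau> \<cdot> (i \<cdot> w)" by (simp only: qq)
    also have "\<dots> = (pV \<otimes> pV) \<cdot> \<delta>D" by (rule tau_i[OF w b])
    finally show ?thesis .
  qed
  show "(\<upsilon> \<cdot> (pC \<otimes> pV)) \<cdot> \<delta>D = \<epsilon>D
      \<and> (\<chi> \<cdot> (pC \<otimes> pV)) \<cdot> \<delta>D = (pV \<otimes> pC) \<cdot> \<delta>D
      \<and> (\<tau> \<cdot> (pC \<otimes> pV)) \<cdot> \<delta>D = (pV \<otimes> pV) \<cdot> \<delta>D" using 1 2 3 by blast
next
  assume H: "(\<upsilon> \<cdot> (pC \<otimes> pV)) \<cdot> \<delta>D = \<epsilon>D
      \<and> (\<chi> \<cdot> (pC \<otimes> pV)) \<cdot> \<delta>D = (pV \<otimes> pC) \<cdot> \<delta>D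
      \<and> (\<tau> \<cdot> (pC \<otimes> pV)) \<cdot> \<delta>D = (pV \<otimes> pV) \<cdot> \<delta>D"
  have h1: "\<upsilon> \<cdot> q = \<epsilon>D" using H by (simp add: pCpV)
  have h2: "\<chi> \<cdot> q = (pV \<otimes> \<one> C) \<cdot> (\<one> D \<otimes> pC) \<cdot> \<delta>D" using H by (simp add: pCpV split1[of pV pC])
  have h3: "\<tau> \<cdot> q = (pV \<otimes> \<one> V) \<cdot> (\<one> D \<otimes> pV) \<cdot> \<delta>D" using H by (simp add: pCpV split1[of pV pV])
  interpret H: MAINH M C V \<delta> \<epsilon> \<chi> \<tau> \<upsilon> D \<delta>D \<epsilon>D pC pV
    by unfold_locales (rule h1, rule h2, rule h3)
  define w where "w = p \<cdot> q"
  have wt: "ar w" "dm w = D" "cd w = S" by (simp_all add: w_def)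
  have iw: "i \<cdot> w = q"
  proof -
    have "i \<cdot> w = (i \<cdot> p) \<cdot> q" by (simp add: w_def)
    also have "\<dots> = q" by (simp only: ip H.E1)
    finally show ?thesis .
  qed
  have cmw: "cm w"
    unfolding coalgebra_morphism_def
  proof (intro conjI)
    show "hom M w D S" using wt by (simp add: hom_def)
    have i1: "w \<otimes> w = (p \<otimes> p) \<cdot> (q \<otimes> q)" unfolding w_def by (intro interchange) simp_all
    have "Dl \<cdot> w = (p \<otimes> p) \<cdot> (dCV \<cdot> (i \<cdot> w))" using wt by simp
    also have "\<dots> = (p \<otimes> p) \<cdot> (dCV \<cdot> q)" by (simp only: iw)
    also have "\<dots> = (p \<otimes> p) \<cdot> ((q \<otimes> q) \<cdot> \<delta>D)" by (simp only: H.E4)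
    also have "\<dots> = (w \<otimes> w) \<cdot> \<delta>D" by (simp add: i1)
    finally show "(w \<otimes> w) \<cdot> \<delta>D = Dl \<cdot> w" by simp
    have "(\<upsilon> \<cdot> i) \<cdot> w = \<upsilon> \<cdot> (i \<cdot> w)" using wt by simp
    also have "\<dots> = \<epsilon>D" by (simp only: iw h1)
    finally show "(\<upsilon> \<cdot> i) \<cdot> w = \<epsilon>D" .
  qed
  have a: "(gam \<cdot> i) \<cdot> w = pC"
  proof -
    have "(gam \<cdot> i) \<cdot> w = gam \<cdot> (i \<cdot> w)" using wt by simp
    also have "\<dots> = pC" by (simp only: iw H.E2)
    finally show ?thesis .
  qed
  have b: "((\<epsilon> \<otimes> \<one> V) \<cdot> i) \<cdot> w = pV"
  proof -
    have "((\<epsilon> \<otimes> \<one> V) \<cdot> i) \<cdot> w = (\<epsilon> \<otimes> \<one> V) \<cdot> (i \<cdot> w)" using wt by simp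
    also have "\<dots> = pV" by (simp only: iw E3)
    finally show ?thesis .
  qed
  have u: "\<forall>w'. cm w' \<and> (gam \<cdot> i) \<cdot> w' = pC \<and> ((\<epsilon> \<otimes> \<one> V) \<cdot> i) \<cdot> w' = pV \<longrightarrow> w' = w"
  proof (intro allI impI, elim conjE)
    fix w' assume w': "cm w'" and a': "(gam \<cdot> i) \<cdot> w' = pC" and b': "((\<epsilon> \<otimes> \<one> V) \<cdot> i) \<cdot> w' = pV"
    note wt' = cmT[OF w']
    have "w' = (p \<cdot> i) \<cdot> w'" using wt' by (simp add: pi)
    also have "\<dots> = p \<cdot> (i \<cdot> w')" using wt' by simp
    also have "\<dots> = w" by (simp only: Kl[OF w' a' b'] w_def)
    finally show "w' = w" .
  qed
  show "\<exists>\<omega>. (cm \<omega> \<and> (gam \<cdot> i) \<cdot> \<omega> = pC \<and> ((\<epsilon> \<otimes> \<one> V) \<cdot> i) \<cdot> \<omega> = pV)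
      \<and> (\<forall>\<omega>'. cm \<omega>' \<and> (gam \<cdot> i) \<cdot> \<omega>' = pC \<and> ((\<epsilon> \<otimes> \<one> V) \<cdot> i) \<cdot> \<omega>' = pV \<longrightarrow> \<omega>' = \<omega>)"
    using cmw a b u by blast
qed

end

theorem theorem1p16:
  fixes M :: "('o, 'm) moncat"
    and C V D CV :: 'o
    and \<delta>C \<epsilon>C \<chi> \<tau> \<upsilon> \<delta>D \<epsilon>D pC pV i p :: 'm
  assumes smc: "strict_monoidal_category M"
    and split: "idempotents_split M"
    and wcc: "weak_crossed_coproduct_precounit M C \<delta>C \<epsilon>C V \<chi> \<tau> \<upsilon>"
    and coalgD: "coalgebra M D \<delta>D \<epsilon>D"
    and pC: "coalgebra_morphism M D \<delta>D \<epsilon>D C \<delta>C \<epsilon>C pC"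
    and pV: "hom M pV D V"
    and i: "hom M i CV (Tobj M C V)"
    and p: "hom M p (Tobj M C V) CV"
    and ip: "Comp M i p = Gamma M C \<delta>C \<epsilon>C V \<chi>"
    and pi: "Comp M p i = Id M CV"
  shows "(\<exists>\<omega>. (coalgebra_morphism M D \<delta>D \<epsilon>D CV
                  (Comp M (Comp M (Tmor M p p) (delta_CV M C \<delta>C V \<chi> \<tau>)) i)
                  (Comp M \<upsilon> i) \<omega>
               \<and> Comp M (Comp M (gamma_ups M C \<delta>C V \<upsilon>) i) \<omega> = pC
               \<and> Comp M (Comp M (Tmor M \<epsilon>C (Id M V)) i) \<omega> = pV)
          \<and> (\<forall>\<omega>'. coalgebra_morphism M D \<delta>D \<epsilon>D CV
                  (Comp M (Comp M (Tmor M p p) (delta_CV M C \<delta>C V \<chi> \<tau>)) i)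
                  (Comp M \<upsilon> i) \<omega>'
               \<and> Comp M (Comp M (gamma_ups M C \<delta>C V \<upsilon>) i) \<omega>' = pC
               \<and> Comp M (Comp M (Tmor M \<epsilon>C (Id M V)) i) \<omega>' = pV
               \<longrightarrow> \<omega>' = \<omega>))
     \<longleftrightarrow>
     (Comp M (Comp M \<upsilon> (Tmor M pC pV)) \<delta>D = \<epsilon>D
      \<and> Comp M (Comp M \<chi> (Tmor M pC pV)) \<delta>D = Comp M (Tmor M pV pC) \<delta>D
      \<and> Comp M (Comp M \<tau> (Tmor M pC pV)) \<delta>D = Comp M (Tmor M pV pV) \<delta>D)"
proof -
  interpret F: FULL M C V \<delta>C \<epsilon>C \<chi> \<tau> \<upsilon> D \<delta>D \<epsilon>D pC pV CV i p
    by unfold_locales (fact assms)+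
  show ?thesis by (rule F.main)
qed

end
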